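(* Let $\mathcal{R}$ be a probabilistic term rewrite system (PTRS) and let $\mathcal{A}(\mathcal{R})$ denote its set of canonical annotated dependency pairs. Then for every basic term $t \in \mathcal{T}_B(\mathcal{R})$ we have \[ \operatorname{edh}_{\mathcal{R}}(t) = \operatorname{edh}_{\langle \mathcal{A}(\mathcal{R}), \mathcal{A}(\mathcal{R}) \rangle}(t), \] and consequently $\iota_{\mathcal{R}} = \iota_{\langle \mathcal{A}(\mathcal{R}), \mathcal{A}(\mathcal{R}) \rangle}$.
   Context: Terms: $\Sigma$ is a finite signature, $\mathcal{V}$ a set of variables, $\mathcal{T}=\mathcal{T}(\Sigma,\mathcal{V})$ the terms; $t|_\pi$ is the subterm at position $\pi$, $t[r]_\pi$ the replacement, $\operatorname{root}(t)$ the root symbol, $\mathcal{V}(t)$ the variables of $t$, and $|t|$ the number of occurrences of function symbols and variables in $t$. A PTRS $\mathcal{R}$ is a finite set of rules $\ell \to \{p_1:r_1,\dots,p_k:r_k\}$ with $\ell\in\mathcal{T}\setminus\mathcal{V}$, $r_j\in\mathcal{T}$, $0<p_j\le 1$, $\sum_j p_j=1$ (a finite multiset of pairs), and $\mathcal{V}(r_j)\subseteq\mathcal{V}(\ell)$. Defined symbols $\mathcal{D}=\{\operatorname{root}(\ell)\mid \ell\to\mu\in\mathcal{R}\}$, constructors $\mathcal{C}=\Sigma\setminus\mathcal{D}$. A term $f(t_1,\dots,t_k)$ is basic if $f\in\mathcal{D}$ and all $t_i\in\mathcal{T}(\mathcal{C},\mathcal{V})$; $\mathcal{T}_B(\mathcal{R})$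 is the set of basic terms. Innermost rewriting: $s \to_{\mathcal{R}} \{p_1:s[r_1\sigma]_\pi,\dots,p_k:s[r_k\sigma]_\pi\}$ if there are a position $\pi$, a rule $\ell\to\{p_1:r_1,\dots,p_k:r_k\}\in\mathcal{R}$ and a substitution $\sigma$ with $s|_\pi=\ell\sigma$ and every proper subterm of $\ell\sigma$ is a normal form w.r.t. $\mathcal{R}$. A rewrite sequence tree (RST) is a (possibly infinite) directed tree with finitely many children per node, each node $v$ labeled $(p_v:t_v)$ with $p_v\in(0,1]$, $t_v\in\mathcal{T}$, root probability $1$, such that if $v$ has children $w_1,\dots,w_k$ ($k\ge1$) then $t_v \to_{\mathcal{R}} \{\tfrac{p_{w_1}}{p_v}:t_{w_1},\dots,\tfrac{p_{w_k}}{p_v}:t_{w_k}\}$ (innermost). For an RST $\mathfrak{T}$, $\operatorname{edl}(\mathfrak{T})=\sum_{v \text{ inner node}} p_v$; $\operatorname{edh}_{\mathcal{R}}(t)=\sup\{\operatorname{edl}(\mathfrak{T})\mid \mathfrak{T}$ an RST with root term $t\}$; $\operatorname{eirc}_{\mathcal{R}}(n)=\sup\{\operatorname{edh}_{\mathcal{R}}(t)\mid t\in\mathcal{T}_B(\mathcal{R}),|t|\le n\}$, and $\iota_{\mathcal{R}}=\iota(\operatorname{eirc}_{\mathcal{R}})$. Complexities: $\mathfrak{C}=\{\mathrm{Pol}_0,\mathrm{Pol}_1,\mathrm{Pol}_2,\dots,\mathrm{Exp},\mathrm{2\text{-}Exp},\mathrm{Fin},\omega\}$ ordered $\mathrm{Pol}_0\sqsubset\mathrm{Pol}_1\sqsubset\dots\sqsubset\mathrm{Exp}\sqsubset\mathrm{2\text{-}Exp}\sqsubset\mathrm{Fin}\sqsubset\omega$.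 For $f:\mathbb{N}\to\mathbb{N}\cup\{\omega\}$: $\iota(f)=\mathrm{Pol}_a$ for the smallest $a$ with $f(n)\in O(n^a)$; otherwise $\mathrm{Exp}$ if $f(n)\in O(2^{\mathrm{pol}(n)})$ for a polynomial $\mathrm{pol}$; otherwise $\mathrm{2\text{-}Exp}$ if $f(n)\in O(2^{2^{\mathrm{pol}(n)}})$; otherwise $\mathrm{Fin}$ if $f(n)\neq\omega$ for all $n$; otherwise $\omega$. Annotations: for each $f\in\mathcal{D}$ a fresh symbol $f^\sharp$ of the same arity; $\mathcal{T}^\sharp$ are terms over $\Sigma\cup\{f^\sharp\mid f\in\mathcal{D}\}$. For $t=f(t_1,\dots,t_k)$ with $f\in\mathcal{D}$, $t^\sharp=f^\sharp(t_1,\dots,t_k)$. $\flat(t)$ removes all annotations; $\sharp_{\mathcal{D}}(t)$ annotates every defined symbol of $t$; $\flat^{\uparrow}_\pi(t)$ removes all annotations strictly above position $\pi$. An annotated dependency pair (ADP) is $\ell\to\{p_1:r_1,\dots,p_k:r_k\}^m$ with $\ell\in\mathcal{T}\setminus\mathcal{V}$, $r_j\in\mathcal{T}^\sharp$, $\mathcal{V}(r_j)\subseteq\mathcal{V}(\ell)$, probabilities as before, and flag $m\in\{\mathsf{true},\mathsf{false}\}$. The canonical ADP of a rule $\ell\to\{p_1:r_1,\dots,p_k:r_k\}$ is $\ell\to\{p_1:\sharp_{\mathcal{D}}(r_1),\dots,p_k:\sharp_{\mathcal{D}}(r_k)\}^{\mathsf{true}}$ and $\mathcal{A}(\mathcal{R})$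 is the set of canonical ADPs of all rules of $\mathcal{R}$. For a set $\mathcal{P}$ of ADPs, defined symbols, constructors and basic terms are defined via the left-hand sides as for PTRSs. Rewriting with a finite set $\mathcal{P}$ of ADPs: $s\in\mathcal{T}^\sharp$ rewrites to $\{p_1:t_1,\dots,p_k:t_k\}$ if there is a position $\pi$ of $s$ carrying a defined or annotated symbol, an ADP $\ell\to\{p_1:r_1,\dots,p_k:r_k\}^m\in\mathcal{P}$ and $\sigma$ with $\flat(s|_\pi)=\ell\sigma$ and all proper subterms of $\ell\sigma$ are normal forms w.r.t. this rewrite relation, and: (at) if $m=\mathsf{true}$ and $s$ is annotated at $\pi$: $t_j=s[r_j\sigma]_\pi$; (nt) if $m=\mathsf{true}$ and not annotated at $\pi$: $t_j=s[\flat(r_j)\sigma]_\pi$; (af) if $m=\mathsf{false}$ and annotated at $\pi$: $t_j=\flat^\uparrow_\pi(s[r_j\sigma]_\pi)$; (nf) if $m=\mathsf{false}$ and not annotated: $t_j=\flat^\uparrow_\pi(s[\flat(r_j)\sigma]_\pi)$. A $\mathcal{P}$-chain tree is defined like an RST but with terms in $\mathcal{T}^\sharp$ and steps of this relation; for an inner node $v$ one records the used ADP and kind of step. For $\mathcal{S}\subseteq\mathcal{P}$, $\operatorname{edl}_{\langle\mathcal{P},\mathcal{S}\rangle}(\mathfrak{T})$ is the sum of $p_v$ over inner nodes $v$ rewritten by an (at)- or (af)-step with an ADP from $\mathcal{S}$; for a basic term $t$, $\operatorname{edh}_{\langle\mathcal{P},\mathcal{S}\rangle}(t)$ is the supremum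 of $\operatorname{edl}_{\langle\mathcal{P},\mathcal{S}\rangle}(\mathfrak{T})$ over all $\mathcal{P}$-chain trees whose root term is $t^\sharp$; $\operatorname{eirc}_{\langle\mathcal{P},\mathcal{S}\rangle}(n)=\sup\{\operatorname{edh}_{\langle\mathcal{P},\mathcal{S}\rangle}(t)\mid t$ basic w.r.t. $\mathcal{P}$, $|t|\le n\}$ and $\iota_{\langle\mathcal{P},\mathcal{S}\rangle}=\iota(\operatorname{eirc}_{\langle\mathcal{P},\mathcal{S}\rangle})$. *)

theory Defs
  imports "HOL-Analysis.Analysis" "HOL-Library.Multiset" "HOL-Computational_Algebra.Polynomial"
begin

text \<open>Function symbols of type 'f; a symbol of the signature is a pair (f, arity),
  as in IsaFoR. Annotated terms are terms over symbols 'f \<times> bool, where (f, True)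
  stands for the annotated symbol f#.\<close>

datatype ('f, 'v) trm = Var 'v | Fun 'f "('f, 'v) trm list"

fun tsize :: "('f, 'v) trm \<Rightarrow> nat" where
  "tsize (Var x) = 1"
| "tsize (Fun f ts) = Suc (sum_list (map tsize ts))"

fun vars :: "('f, 'v) trm \<Rightarrow> 'v set" where
  "vars (Var x) = {x}"
| "vars (Fun f ts) = (\<Union>t\<in>set ts. vars t)"

fun funs :: "('f, 'v) trm \<Rightarrow> ('f \<times> nat) set" where
  "funs (Var x) = {}"
| "funs (Fun f ts) = insert (f, length ts) (\<Union>t\<in>set ts. funs t)"

fun subst :: "('f, 'v) trm \<Rightarrow> ('v \<Rightarrow> ('f, 'v) trm) \<Rightarrow> ('f, 'v) trm" where
  "subst (Var x) \<sigma> = \<sigma> x"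
| "subst (Fun f ts) \<sigma> = Fun f (map (\<lambda>t. subst t \<sigma>) ts)"

function poss :: "('f, 'v) trm \<Rightarrow> nat list set" where
  "poss (Var x) = {[]}"
| "poss (Fun f ts) = insert [] (\<Union>i \<in> {..<length ts}. Cons i ` poss (ts ! i))"
  by pat_completeness auto
termination
  by (relation "Wellfounded.measure size") (auto simp: less_Suc_eq_le intro!: size_list_estimation' nth_mem)

fun subt_at :: "('f, 'v) trm \<Rightarrow> nat list \<Rightarrow> ('f, 'v) trm" where
  "subt_at t [] = t"
| "subt_at (Var x) (i # q) = Var x"
| "subt_at (Fun f ts) (i # q) = subt_at (ts ! i) q"

function replace_at :: "('f, 'v) trm \<Rightarrow> nat list \<Rightarrow> ('f, 'v) trm \<Rightarrow> ('f, 'v) trm" where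
  "replace_at t [] s = s"
| "replace_at (Var x) (i # q) s = Var x"
| "replace_at (Fun f ts) (i # q) s =
     (if i < length ts then Fun f (ts[i := replace_at (ts ! i) q s]) else Fun f ts)"
  by pat_completeness auto
termination
  by (relation "Wellfounded.measure (\<lambda>(t, q, s). size t)") (auto simp: less_Suc_eq_le intro!: size_list_estimation' nth_mem)

definition proper_subterms :: "('f, 'v) trm \<Rightarrow> ('f, 'v) trm set" where
  "proper_subterms t = {subt_at t q | q. q \<in> poss t \<and> q \<noteq> []}"

type_synonym ('f, 'v) prule = "('f, 'v) trm \<times> (real \<times> ('f, 'v) trm) multiset"

definition ptrs :: "('f \<times> nat) set \<Rightarrow> ('f, 'v) prule set \<Rightarrow> bool" where
  "ptrs F R \<longleftrightarrow> finite R \<and>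
    (\<forall>(l, \<mu>) \<in> R. (\<exists>f ts. l = Fun f ts) \<and> funs l \<subseteq> F \<and> \<mu> \<noteq> {#} \<and>
        (\<forall>(p, r) \<in> set_mset \<mu>. 0 < p \<and> p \<le> 1 \<and> vars r \<subseteq> vars l \<and> funs r \<subseteq> F) \<and>
        sum_mset (image_mset fst \<mu>) = 1)"

definition defined :: "('f, 'v) prule set \<Rightarrow> ('f \<times> nat) set" where
  "defined R = {(f, length ts) | f ts \<mu>. (Fun f ts, \<mu>) \<in> R}"

definition basic_terms :: "('f \<times> nat) set \<Rightarrow> ('f \<times> nat) set \<Rightarrow> ('f, 'v) trm set" where
  "basic_terms F D = {Fun f ts | f ts. (f, length ts) \<in> D \<and> funs (Fun f ts) \<subseteq> F \<and>
        (\<forall>u \<in> set ts. funs u \<inter> D = {})}"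

text \<open>Unrestricted rewrite step (used only to define normal forms; innermost and
  unrestricted rewriting have the same normal forms).\<close>
definition rstep_full :: "('f, 'v) prule set \<Rightarrow> ('f, 'v) trm \<Rightarrow> (real \<times> ('f, 'v) trm) multiset \<Rightarrow> bool" where
  "rstep_full R s \<nu> \<longleftrightarrow> (\<exists>\<pi> \<in> poss s. \<exists>l \<mu> \<sigma>. (l, \<mu>) \<in> R \<and> subt_at s \<pi> = subst l \<sigma> \<and>
      \<nu> = image_mset (\<lambda>(p, r). (p, replace_at s \<pi> (subst r \<sigma>))) \<mu>)"

definition NF :: "('f, 'v) prule set \<Rightarrow> ('f, 'v) trm \<Rightarrow> bool" where
  "NF R u \<longleftrightarrow> \<not> (\<exists>\<nu>. rstep_full R u \<nu>)"

definition istep :: "('f, 'v) prule set \<Rightarrow> ('f, 'v) trm \<Rightarrow> (real \<times> ('f, 'v) trm) multiset \<Rightarrow> bool" where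
  "istep R s \<nu> \<longleftrightarrow> (\<exists>\<pi> \<in> poss s. \<exists>l \<mu> \<sigma>. (l, \<mu>) \<in> R \<and> subt_at s \<pi> = subst l \<sigma> \<and>
      (\<forall>u \<in> proper_subterms (subst l \<sigma>). NF R u) \<and>
      \<nu> = image_mset (\<lambda>(p, r). (p, replace_at s \<pi> (subst r \<sigma>))) \<mu>)"

text \<open>A (possibly infinite) tree with finitely many children per node: nodes are
  addresses (nat lists), the children of v are v@[i] for i < k v.\<close>
definition tree_shape :: "nat list set \<Rightarrow> (nat list \<Rightarrow> nat) \<Rightarrow> bool" where
  "tree_shape N k \<longleftrightarrow> [] \<in> N \<and> (\<forall>v i. v @ [i] \<in> N \<longleftrightarrow> v \<in> N \<and> i < k v)"

definition children_mset :: "(nat list \<Rightarrow> real) \<Rightarrow> (nat list \<Rightarrow> 'a) \<Rightarrow> (nat list \<Rightarrow> nat) \<Rightarrow> nat list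
     \<Rightarrow> (real \<times> 'a) multiset" where
  "children_mset p t k v = mset (map (\<lambda>i. (p (v @ [i]) / p v, t (v @ [i]))) [0..<k v])"

definition RST :: "('f, 'v) prule set \<Rightarrow> nat list set \<Rightarrow> (nat list \<Rightarrow> real) \<Rightarrow>
     (nat list \<Rightarrow> ('f, 'v) trm) \<Rightarrow> (nat list \<Rightarrow> nat) \<Rightarrow> bool" where
  "RST R N p t k \<longleftrightarrow> tree_shape N k \<and> p [] = 1 \<and> (\<forall>v \<in> N. 0 < p v \<and> p v \<le> 1) \<and>
     (\<forall>v \<in> N. 1 \<le> k v \<longrightarrow> istep R (t v) (children_mset p t k v))"

definition edl :: "nat list set \<Rightarrow> (nat list \<Rightarrow> real) \<Rightarrow> (nat list \<Rightarrow> nat) \<Rightarrow> ennreal" where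
  "edl N p k = (\<Sum>\<^sub>\<infinity> v \<in> {v \<in> N. 1 \<le> k v}. ennreal (p v))"

definition edh :: "('f, 'v) prule set \<Rightarrow> ('f, 'v) trm \<Rightarrow> ennreal" where
  "edh R s = (SUP x \<in> {(N, p, t, k). RST R N p t k \<and> t [] = s}.
                 (case x of (N, p, t, k) \<Rightarrow> edl N p k))"

definition eirc :: "('f \<times> nat) set \<Rightarrow> ('f, 'v) prule set \<Rightarrow> nat \<Rightarrow> ennreal" where
  "eirc F R n = (SUP t \<in> {t \<in> basic_terms F (defined R). tsize t \<le> n}. edh R t)"

datatype complexity = Pol nat | Exp | TwoExp | Fin | Omega

definition bigO :: "(nat \<Rightarrow> ennreal) \<Rightarrow> (nat \<Rightarrow> real) \<Rightarrow> bool" where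
  "bigO f g \<longleftrightarrow> (\<exists>c > 0. \<exists>n0. \<forall>n \<ge> n0. f n \<le> ennreal (c * g n))"

definition iota :: "(nat \<Rightarrow> ennreal) \<Rightarrow> complexity" where
  "iota f = (if \<exists>a. bigO f (\<lambda>n. real n ^ a) then Pol (LEAST a. bigO f (\<lambda>n. real n ^ a))
     else if \<exists>pl :: real poly. bigO f (\<lambda>n. 2 powr poly pl (real n)) then Exp
     else if \<exists>pl :: real poly. bigO f (\<lambda>n. 2 powr (2 powr poly pl (real n))) then TwoExp
     else if \<forall>n. f n \<noteq> \<infinity> then Fin
     else Omega)"

definition lift :: "('f, 'v) trm \<Rightarrow> ('f \<times> bool, 'v) trm" where
  "lift t = map_trm (\<lambda>f. (f, False)) id t"

definition flat :: "('f \<times> bool, 'v) trm \<Rightarrow> ('f, 'v) trm" where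
  "flat t = map_trm fst id t"

fun sharp_root :: "('f, 'v) trm \<Rightarrow> ('f \<times> bool, 'v) trm" where
  "sharp_root (Var x) = Var x"
| "sharp_root (Fun f ts) = Fun (f, True) (map lift ts)"

fun sharpD :: "('f \<times> nat) set \<Rightarrow> ('f, 'v) trm \<Rightarrow> ('f \<times> bool, 'v) trm" where
  "sharpD D (Var x) = Var x"
| "sharpD D (Fun f ts) = Fun (f, (f, length ts) \<in> D) (map (sharpD D) ts)"

fun unannot_above :: "nat list \<Rightarrow> ('f \<times> bool, 'v) trm \<Rightarrow> ('f \<times> bool, 'v) trm" where
  "unannot_above [] s = s"
| "unannot_above (i # q) (Var x) = Var x"
| "unannot_above (i # q) (Fun (f, b) ts) =
     Fun (f, False) (if i < length ts then ts[i := unannot_above q (ts ! i)] else ts)"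

fun annotated :: "('f \<times> bool, 'v) trm \<Rightarrow> bool" where
  "annotated (Var x) = False"
| "annotated (Fun (f, b) ts) = b"

type_synonym ('f, 'v) adp = "('f, 'v) trm \<times> (real \<times> ('f \<times> bool, 'v) trm) multiset \<times> bool"

definition adefined :: "('f, 'v) adp set \<Rightarrow> ('f \<times> nat) set" where
  "adefined P = {(f, length ts) | f ts \<mu> m. (Fun f ts, \<mu>, m) \<in> P}"

definition canonical_adp :: "('f \<times> nat) set \<Rightarrow> ('f, 'v) prule \<Rightarrow> ('f, 'v) adp" where
  "canonical_adp D rl = (case rl of (l, \<mu>) \<Rightarrow> (l, image_mset (\<lambda>(p, r). (p, sharpD D r)) \<mu>, True))"

definition ADPs :: "('f, 'v) prule set \<Rightarrow> ('f, 'v) adp set" where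
  "ADPs R = canonical_adp (defined R) ` R"

text \<open>Result term of an ADP step at position pi with rhs r, flag m, where b says
  whether s is annotated at pi (cases (at), (nt), (af), (nf)).\<close>
definition adp_res :: "bool \<Rightarrow> bool \<Rightarrow> ('f \<times> bool, 'v) trm \<Rightarrow> nat list \<Rightarrow>
     ('f \<times> bool, 'v) trm \<Rightarrow> ('v \<Rightarrow> ('f, 'v) trm) \<Rightarrow> ('f \<times> bool, 'v) trm" where
  "adp_res m b s \<pi> r \<sigma> =
     (let r' = (if b then r else lift (flat r));
          u = replace_at s \<pi> (subst r' (lift \<circ> \<sigma>))
      in if m then u else unannot_above \<pi> u)"

text \<open>A step with the ADP rho at position pi; innermost flag ic selects whether the
  proper subterms of l sigma must be normal forms (NFP).\<close>
definition adp_step_at :: "('f, 'v) adp set \<Rightarrow> (('f \<times> bool, 'v) trm \<Rightarrow> bool) \<Rightarrow>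
     ('f \<times> bool, 'v) trm \<Rightarrow> ('f, 'v) adp \<Rightarrow> bool \<Rightarrow>
     (real \<times> ('f \<times> bool, 'v) trm) multiset \<Rightarrow> bool" where
  "adp_step_at P NFP s \<rho> b \<nu> \<longleftrightarrow> \<rho> \<in> P \<and>
     (\<exists>\<pi> \<in> poss s. \<exists>\<sigma> f b' ts. case \<rho> of (l, \<mu>, m) \<Rightarrow>
        subt_at s \<pi> = Fun (f, b') ts \<and> (b' \<or> (f, length ts) \<in> adefined P) \<and>
        b = annotated (subt_at s \<pi>) \<and>
        flat (subt_at s \<pi>) = subst l \<sigma> \<and>
        (\<forall>u \<in> proper_subterms (subst l \<sigma>). NFP (lift u)) \<and>
        \<nu> = image_mset (\<lambda>(p, r). (p, adp_res m b s \<pi> r \<sigma>)) \<mu>)"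

text \<open>Normal forms of the ADP rewrite relation (unrestricted and innermost
  rewriting have the same normal forms).\<close>
definition adp_NF :: "('f, 'v) adp set \<Rightarrow> ('f \<times> bool, 'v) trm \<Rightarrow> bool" where
  "adp_NF P u \<longleftrightarrow> \<not> (\<exists>\<rho> b \<nu>. adp_step_at P (\<lambda>_. True) u \<rho> b \<nu>)"

definition adp_istep :: "('f, 'v) adp set \<Rightarrow> ('f \<times> bool, 'v) trm \<Rightarrow> ('f, 'v) adp \<Rightarrow> bool \<Rightarrow>
     (real \<times> ('f \<times> bool, 'v) trm) multiset \<Rightarrow> bool" where
  "adp_istep P s \<rho> b \<nu> \<longleftrightarrow> adp_step_at P (adp_NF P) s \<rho> b \<nu>"

text \<open>P-chain trees; lab v records the ADP used at inner node v and whether the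
  step was at an annotated position ((at)/(af)) or not ((nt)/(nf)).\<close>
definition chain_tree :: "('f, 'v) adp set \<Rightarrow> nat list set \<Rightarrow> (nat list \<Rightarrow> real) \<Rightarrow>
     (nat list \<Rightarrow> ('f \<times> bool, 'v) trm) \<Rightarrow> (nat list \<Rightarrow> nat) \<Rightarrow>
     (nat list \<Rightarrow> ('f, 'v) adp \<times> bool) \<Rightarrow> bool" where
  "chain_tree P N p t k lab \<longleftrightarrow> tree_shape N k \<and> p [] = 1 \<and> (\<forall>v \<in> N. 0 < p v \<and> p v \<le> 1) \<and>
     (\<forall>v \<in> N. 1 \<le> k v \<longrightarrow> adp_istep P (t v) (fst (lab v)) (snd (lab v)) (children_mset p t k v))"

definition edl_adp :: "('f, 'v) adp set \<Rightarrow> nat list set \<Rightarrow> (nat list \<Rightarrow> real) \<Rightarrow>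
     (nat list \<Rightarrow> nat) \<Rightarrow> (nat list \<Rightarrow> ('f, 'v) adp \<times> bool) \<Rightarrow> ennreal" where
  "edl_adp S N p k lab =
     (\<Sum>\<^sub>\<infinity> v \<in> {v \<in> N. 1 \<le> k v \<and> snd (lab v) \<and> fst (lab v) \<in> S}. ennreal (p v))"

definition edh_adp :: "('f, 'v) adp set \<Rightarrow> ('f, 'v) adp set \<Rightarrow> ('f, 'v) trm \<Rightarrow> ennreal" where
  "edh_adp P S s = (SUP x \<in> {(N, p, t, k, lab). chain_tree P N p t k lab \<and> t [] = sharp_root s}.
                 (case x of (N, p, t, k, lab) \<Rightarrow> edl_adp S N p k lab))"

definition eirc_adp :: "('f \<times> nat) set \<Rightarrow> ('f, 'v) adp set \<Rightarrow> ('f, 'v) adp set \<Rightarrow> nat \<Rightarrow> ennreal" where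
  "eirc_adp F P S n = (SUP t \<in> {t \<in> basic_terms F (adefined P). tsize t \<le> n}. edh_adp P S t)"

end

theory Submission
  imports Defs
begin

lemma mset_eq_image_ex:
  "mset xs = image_mset f M \<Longrightarrow> \<exists>ys. mset ys = M \<and> map f ys = xs"
proof (induction xs arbitrary: M)
  case Nil
  then show ?case by auto
next
  case (Cons x xs)
  from Cons.prems have "image_mset f M = add_mset x (mset xs)" by simp
  from msed_map_invR[OF this] obtain M1 a where
    "M = add_mset a M1" "f a = x" "image_mset f M1 = mset xs" by blast
  with Cons.IH[of M1] obtain ys where "mset ys = M1" "map f ys = xs" by auto
  then show ?case using \<open>M = _\<close> \<open>f a = x\<close> by (intro exI[of _ "a # ys"]) auto
qed

lemma poss_map: "poss (map_trm g h t) = poss t"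
  by (induction t) (auto simp: nth_map)

lemma subt_map: "q \<in> poss t \<Longrightarrow> subt_at (map_trm g h t) q = map_trm g h (subt_at t q)"
proof (induction q arbitrary: t)
  case Nil then show ?case by simp
next
  case (Cons i q)
  then show ?case by (cases t) auto
qed

lemma replace_map: "replace_at (map_trm g h t) q (map_trm g h s) = map_trm g h (replace_at t q s)"
proof (induction q arbitrary: t)
  case Nil then show ?case by simp
next
  case (Cons i q)
  then show ?case by (cases t) (auto simp: map_update)
qed

lemma subst_map: "map_trm g id (subst t \<sigma>) = subst (map_trm g id t) (map_trm g id \<circ> \<sigma>)"
  by (induction t) auto

lemma flat_lift[simp]: "flat (lift t) = t"
  unfolding flat_def lift_def by (simp add: trm.map_comp comp_def trm.map_ident)

lemma flat_sharpD[simp]: "flat (sharpD D r) = r"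
  by (induction r) (auto simp: flat_def intro: map_idI)

lemma flat_subst: "flat (subst r (lift \<circ> \<sigma>)) = subst (flat r) \<sigma>"
  unfolding flat_def by (simp add: subst_map comp_def flat_def[symmetric])

lemma poss_flat[simp]: "poss (flat t) = poss t" unfolding flat_def by (rule poss_map)
lemma poss_lift[simp]: "poss (lift t) = poss t" unfolding lift_def by (rule poss_map)

lemma subt_flat: "q \<in> poss t \<Longrightarrow> subt_at (flat t) q = flat (subt_at t q)"
  unfolding flat_def by (rule subt_map)
lemma subt_lift: "q \<in> poss t \<Longrightarrow> subt_at (lift t) q = lift (subt_at t q)"
  unfolding lift_def by (rule subt_map)
lemma replace_flat: "flat (replace_at t q s) = replace_at (flat t) q (flat s)"
  unfolding flat_def by (rule replace_map[symmetric])

lemma NF_iff: "NF R u \<longleftrightarrow> \<not>(\<exists>\<pi>\<in>poss u. \<exists>l \<mu> \<sigma>. (l,\<mu>)\<in>R \<and> subt_at u \<pi> = subst l \<sigma>)"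
  unfolding NF_def rstep_full_def by blast

lemma NF_Fun: "NF R (Fun f ts) \<longleftrightarrow> (\<not>(\<exists>l \<mu> \<sigma>. (l,\<mu>)\<in>R \<and> Fun f ts = subst l \<sigma>)) \<and> (\<forall>t\<in>set ts. NF R t)"
proof -
  have A: "(\<exists>\<pi>\<in>poss (Fun f ts). P (subt_at (Fun f ts) \<pi>)) \<longleftrightarrow> P (Fun f ts) \<or> (\<exists>t\<in>set ts. \<exists>\<pi>\<in>poss t. P (subt_at t \<pi>))" for P
  proof
    assume "\<exists>\<pi>\<in>poss (Fun f ts). P (subt_at (Fun f ts) \<pi>)"
    then show "P (Fun f ts) \<or> (\<exists>t\<in>set ts. \<exists>\<pi>\<in>poss t. P (subt_at t \<pi>))"
      by auto
  next
    assume "P (Fun f ts) \<or> (\<exists>t\<in>set ts. \<exists>\<pi>\<in>poss t. P (subt_at t \<pi>))"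
    then show "\<exists>\<pi>\<in>poss (Fun f ts). P (subt_at (Fun f ts) \<pi>)"
    proof
      assume "P (Fun f ts)" then show ?thesis by (intro bexI[of _ "[]"]) auto
    next
      assume "\<exists>t\<in>set ts. \<exists>\<pi>\<in>poss t. P (subt_at t \<pi>)"
      then obtain i \<pi> where "i < length ts" "\<pi> \<in> poss (ts!i)" "P (subt_at (ts!i) \<pi>)"
        by (auto simp: in_set_conv_nth)
      then show ?thesis by (intro bexI[of _ "i # \<pi>"]) auto
    qed
  qed
  show ?thesis unfolding NF_iff
    using A[of "\<lambda>u. \<exists>l \<mu> \<sigma>. (l,\<mu>)\<in>R \<and> u = subst l \<sigma>"] by blast
qed

lemma NF_subt: "q \<in> poss u \<Longrightarrow> NF R u \<Longrightarrow> NF R (subt_at u q)"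
proof (induction q arbitrary: u)
  case Nil then show ?case by simp
next
  case (Cons i q)
  then show ?case by (cases u) (auto simp: NF_Fun)
qed

lemma not_NF_redex: "(l,\<mu>)\<in>R \<Longrightarrow> \<not>NF R (subst l \<sigma>)"
  unfolding NF_iff by (rule notI) (metis poss.simps insertI1 subt_at.simps(1) poss.elims)

lemma lift_Fun[simp]: "lift (Fun f ts) = Fun (f, False) (map lift ts)"
  unfolding lift_def by simp
lemma lift_Var[simp]: "lift (Var x) = Var x"
  unfolding lift_def by simp
lemma flat_Fun[simp]: "flat (Fun fb ts) = Fun (fst fb) (map flat ts)"
  unfolding flat_def by simp
lemma flat_Var[simp]: "flat (Var x) = Var x"
  unfolding flat_def by simp

lemma ptrs_lhs: "ptrs F R \<Longrightarrow> (l,\<mu>)\<in>R \<Longrightarrow> \<exists>f ls. l = Fun f ls"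
  unfolding ptrs_def by fast
lemma ptrs_vars: "ptrs F R \<Longrightarrow> (l,\<mu>)\<in>R \<Longrightarrow> (q,r) \<in># \<mu> \<Longrightarrow> vars r \<subseteq> vars l"
  unfolding ptrs_def by fast

lemma adefined_ADPs: "adefined (ADPs R) = defined R"
  unfolding adefined_def ADPs_def canonical_adp_def defined_def by force

lemma canonical_adp_simp: "canonical_adp D (l, \<mu>) = (l, image_mset (\<lambda>(p, r). (p, sharpD D r)) \<mu>, True)"
  unfolding canonical_adp_def by simp

lemma ADPs_elim:
  assumes "\<rho> \<in> ADPs R"
  obtains l \<mu> where "(l,\<mu>) \<in> R" "\<rho> = (l, image_mset (\<lambda>(p, r). (p, sharpD (defined R) r)) \<mu>, True)"
  using assms unfolding ADPs_def canonical_adp_def by auto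

lemma adp_NF_lift:
  assumes "ptrs F R"
  shows "adp_NF (ADPs R) (lift u) \<longleftrightarrow> NF R u"
proof
  assume "adp_NF (ADPs R) (lift u)"
  show "NF R u"
  proof (rule ccontr)
    assume "\<not> NF R u"
    then obtain \<pi> l \<mu> \<sigma> where pi: "\<pi> \<in> poss u" "(l,\<mu>)\<in>R" "subt_at u \<pi> = subst l \<sigma>"
      unfolding NF_iff by blast
    obtain f ls where l: "l = Fun f ls" using ptrs_lhs[OF assms pi(2)] by blast
    define \<rho> where "\<rho> = canonical_adp (defined R) (l, \<mu>)"
    have "adp_step_at (ADPs R) (\<lambda>_. True) (lift u) \<rho> False
        (image_mset (\<lambda>(p, r). (p, adp_res True False (lift u) \<pi> r \<sigma>)) (image_mset (\<lambda>(p, r). (p, sharpD (defined R) r)) \<mu>))"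
      unfolding adp_step_at_def
    proof (intro conjI bexI exI)
      show "\<rho> \<in> ADPs R" unfolding \<rho>_def ADPs_def using pi by auto
      show "\<pi> \<in> poss (lift u)" using pi by simp
      have sub: "subt_at (lift u) \<pi> = Fun (f, False) (map lift (map (\<lambda>t. subst t \<sigma>) ls))"
        using pi l by (simp add: subt_lift)
      have fd: "(f, length ls) \<in> adefined (ADPs R)"
        unfolding adefined_ADPs defined_def using pi l by blast
      show "case \<rho> of (l, \<mu>', m) \<Rightarrow>
        subt_at (lift u) \<pi> = Fun (f, False) (map lift (map (\<lambda>t. subst t \<sigma>) ls)) \<and>
        (False \<or> (f, length (map lift (map (\<lambda>t. subst t \<sigma>) ls))) \<in> adefined (ADPs R)) \<and>
        False = annotated (subt_at (lift u) \<pi>) \<and>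
        flat (subt_at (lift u) \<pi>) = subst l \<sigma> \<and>
        (\<forall>u\<in>proper_subterms (subst l \<sigma>). True) \<and>
        image_mset (\<lambda>(p, r). (p, adp_res True False (lift u) \<pi> r \<sigma>)) (image_mset (\<lambda>(p, r). (p, sharpD (defined R) r)) \<mu>) =
        image_mset (\<lambda>(p, r). (p, adp_res m False (lift u) \<pi> r \<sigma>)) \<mu>'"
        unfolding \<rho>_def canonical_adp_simp using sub fd pi(3) l
        by (simp add: comp_def)
    qed
    then show False using \<open>adp_NF (ADPs R) (lift u)\<close> unfolding adp_NF_def by blast
  qed
next
  assume "NF R u"
  show "adp_NF (ADPs R) (lift u)"
    unfolding adp_NF_def
  proof clarify
    fix \<rho> b \<nu>
    assume st: "adp_step_at (ADPs R) (\<lambda>_. True) (lift u) \<rho> b \<nu>"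
    then have "\<rho> \<in> ADPs R" unfolding adp_step_at_def by blast
    then obtain l \<mu> where lm: "(l,\<mu>) \<in> R" "\<rho> = (l, image_mset (\<lambda>(p, r). (p, sharpD (defined R) r)) \<mu>, True)"
      by (rule ADPs_elim)
    from st obtain \<pi> \<sigma> where "\<pi> \<in> poss (lift u)" "flat (subt_at (lift u) \<pi>) = subst l \<sigma>"
      unfolding adp_step_at_def lm(2) by auto
    then have "\<pi> \<in> poss u" "subt_at u \<pi> = subst l \<sigma>" by (auto simp: subt_lift)
    then show False using \<open>NF R u\<close> lm(1) unfolding NF_iff by blast
  qed
qed


fun ainv :: "('f \<times> nat) set \<Rightarrow> ('f, 'v) prule set \<Rightarrow> ('f \<times> bool, 'v) trm \<Rightarrow> bool" where
  "ainv D R (Var x) = True"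
| "ainv D R (Fun (f, b) ts) = ((((f, length ts) \<in> D \<and> \<not> NF R (flat (Fun (f, b) ts))) \<longrightarrow> b) \<and> list_all (ainv D R) ts)"

lemma ainv_lift_NF: "NF R u \<Longrightarrow> ainv D R (lift u)"
  by (induction u) (auto simp: NF_Fun list_all_iff comp_def)

lemma ainv_lift_noD: "funs u \<inter> D = {} \<Longrightarrow> ainv D R (lift u)"
  by (induction u) (auto simp: list_all_iff)

lemma ainv_subst_sharp: "(\<forall>x\<in>vars r. NF R (\<sigma> x)) \<Longrightarrow> ainv D R (subst (sharpD D r) (lift \<circ> \<sigma>))"
  by (induction r) (auto simp: list_all_iff ainv_lift_NF)

lemma ainv_subt: "ainv D R s \<Longrightarrow> q \<in> poss s \<Longrightarrow> ainv D R (subt_at s q)"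
proof (induction q arbitrary: s)
  case Nil then show ?case by simp
next
  case (Cons i q)
  then show ?case
  proof (cases s)
    case (Fun fb ts)
    with Cons show ?thesis by (cases fb) (auto simp: list_all_iff)
  qed auto
qed

lemma ainv_replace:
  "ainv D R s \<Longrightarrow> \<pi> \<in> poss s \<Longrightarrow> \<not> NF R (flat (subt_at s \<pi>)) \<Longrightarrow> ainv D R X \<Longrightarrow> ainv D R (replace_at s \<pi> X)"
proof (induction \<pi> arbitrary: s)
  case Nil then show ?case by simp
next
  case (Cons i q)
  show ?case
  proof (cases s)
    case (Var x) with Cons show ?thesis by simp
  next
    case (Fun fb ts)
    obtain f b where fb: "fb = (f, b)" by (cases fb)
    have i: "i < length ts" "q \<in> poss (ts ! i)" using Cons.prems(2) Fun by auto
    have inv_ts: "\<forall>t\<in>set ts. ainv D R t" "(f, length ts) \<in> D \<and> \<not> NF R (flat (Fun (f, b) ts)) \<longrightarrow> b"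
      using Cons.prems(1) Fun fb by (auto simp: list_all_iff)
    have "\<not> NF R (flat (subt_at (ts ! i) q))" using Cons.prems(3) Fun i by simp
    then have "\<not> NF R (subt_at (flat (ts ! i)) q)" using i by (simp add: subt_flat)
    then have "\<not> NF R (flat (ts ! i))" using NF_subt[of q "flat (ts ! i)" R] i by force
    moreover have "ts ! i \<in> set ts" using i by simp
    ultimately have nNF: "\<not> NF R (flat (Fun (f, b) ts))" by (auto simp: NF_Fun)
    have IH: "ainv D R (replace_at (ts ! i) q X)"
      using Cons.IH[of "ts ! i"] inv_ts(1) i Cons.prems(3,4) Fun by simp
    have "\<forall>t\<in>set (ts[i := replace_at (ts ! i) q X]). ainv D R t"
      using IH inv_ts(1) set_update_subset_insert by fastforce
    then show ?thesis using Fun fb i inv_ts(2) nNF by (auto simp: list_all_iff)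
  qed
qed

lemma Nil_poss[simp]: "[] \<in> poss t" by (cases t) auto

lemma NF_subst_var: "NF R (subst t \<sigma>) \<Longrightarrow> x \<in> vars t \<Longrightarrow> NF R (\<sigma> x)"
  by (induction t) (auto simp: NF_Fun)

lemma proper_NF_args:
  assumes "\<forall>u\<in>proper_subterms (Fun f ts). NF R u" "t \<in> set ts"
  shows "NF R t"
proof -
  obtain i where i: "i < length ts" "t = ts ! i" using assms(2) by (auto simp: in_set_conv_nth)
  have "[i] \<in> (#) i ` poss (ts ! i)" using Nil_poss[of "ts ! i"] by blast
  then have "[i] \<in> poss (Fun f ts)" using i by (simp only: poss.simps) blast
  then have "ts ! i \<in> proper_subterms (Fun f ts)" unfolding proper_subterms_def
    by (intro CollectI exI[of _ "[i]"]) auto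
  then show ?thesis using assms(1) i by auto
qed

lemma step_core:
  assumes ptrs: "ptrs F R" and inv: "ainv (defined R) R s" and pi: "\<pi> \<in> poss s"
    and lm: "(l, \<mu>) \<in> R" and fl: "flat (subt_at s \<pi>) = subst l \<sigma>"
    and nf: "\<forall>u\<in>proper_subterms (subst l \<sigma>). NF R u"
  shows "\<exists>f ts. subt_at s \<pi> = Fun (f, True) ts \<and> (f, length ts) \<in> defined R"
    and "(q, r) \<in># \<mu> \<Longrightarrow> ainv (defined R) R (replace_at s \<pi> (subst (sharpD (defined R) r) (lift \<circ> \<sigma>)))"
proof -
  obtain f ls where l: "l = Fun f ls" using ptrs_lhs[OF ptrs lm] by blast
  have nred: "\<not> NF R (flat (subt_at s \<pi>))" using fl not_NF_redex[OF lm] by simp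
  have isub: "ainv (defined R) R (subt_at s \<pi>)" using ainv_subt[OF inv pi] .
  obtain fb ts where sub: "subt_at s \<pi> = Fun fb ts"
    using fl l by (cases "subt_at s \<pi>") auto
  obtain g b where fb: "fb = (g, b)" by (cases fb)
  have "Fun g (map flat ts) = Fun f (map (\<lambda>t. subst t \<sigma>) ls)" using fl l sub fb by simp
  then have g: "g = f" "length ts = length ls" by (auto dest: map_eq_imp_length_eq)
  have def: "(f, length ls) \<in> defined R" unfolding defined_def using lm l by blast
  have "b" using isub sub fb g def nred by simp
  then show "\<exists>f ts. subt_at s \<pi> = Fun (f, True) ts \<and> (f, length ts) \<in> defined R"
    using sub fb g def by auto
  assume qr: "(q, r) \<in># \<mu>"
  have vr: "vars r \<subseteq> vars l" using ptrs_vars[OF ptrs lm qr] .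
  have "\<forall>x\<in>vars r. NF R (\<sigma> x)"
  proof
    fix x assume "x \<in> vars r"
    then have x: "x \<in> vars l" using vr by auto
    then obtain t where t: "t \<in> set ls" "x \<in> vars t" using l by auto
    have nf': "\<forall>u\<in>proper_subterms (Fun f (map (\<lambda>t. subst t \<sigma>) ls)). NF R u" using nf l by simp
    have "subst t \<sigma> \<in> set (map (\<lambda>t. subst t \<sigma>) ls)" using t(1) by simp
    then have "NF R (subst t \<sigma>)" using proper_NF_args[OF nf'] by blast
    then show "NF R (\<sigma> x)" by (rule NF_subst_var[OF _ t(2)])
  qed
  then have "ainv (defined R) R (subst (sharpD (defined R) r) (lift \<circ> \<sigma>))" by (rule ainv_subst_sharp)
  then show "ainv (defined R) R (replace_at s \<pi> (subst (sharpD (defined R) r) (lift \<circ> \<sigma>)))"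
    by (rule ainv_replace[OF inv pi nred])
qed


lemma adp_res_TT: "adp_res True True s \<pi> r \<sigma> = replace_at s \<pi> (subst r (lift \<circ> \<sigma>))"
  unfolding adp_res_def by simp

lemma adp_step_analysis:
  assumes ptrs: "ptrs F R" and inv: "ainv (defined R) R s" and st: "adp_istep (ADPs R) s \<rho> b \<nu>"
  shows "b \<and> \<rho> \<in> ADPs R \<and> (\<exists>\<pi> l \<mu> \<sigma>. (l, \<mu>) \<in> R \<and> \<pi> \<in> poss s \<and> flat (subt_at s \<pi>) = subst l \<sigma> \<and>
     (\<forall>u\<in>proper_subterms (subst l \<sigma>). NF R u) \<and>
     \<nu> = image_mset (\<lambda>(q, r). (q, replace_at s \<pi> (subst (sharpD (defined R) r) (lift \<circ> \<sigma>)))) \<mu>)"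
proof -
  have rho: "\<rho> \<in> ADPs R" using st unfolding adp_istep_def adp_step_at_def by blast
  then obtain l \<mu> where lm: "(l,\<mu>) \<in> R" "\<rho> = (l, image_mset (\<lambda>(p, r). (p, sharpD (defined R) r)) \<mu>, True)"
    by (rule ADPs_elim)
  from st obtain \<pi> \<sigma> f b' ts where pi: "\<pi> \<in> poss s" and
    c: "subt_at s \<pi> = Fun (f, b') ts" "b = annotated (subt_at s \<pi>)" "flat (subt_at s \<pi>) = subst l \<sigma>"
       "\<forall>u\<in>proper_subterms (subst l \<sigma>). adp_NF (ADPs R) (lift u)"
       "\<nu> = image_mset (\<lambda>(p, r). (p, adp_res True b s \<pi> r \<sigma>)) (image_mset (\<lambda>(p, r). (p, sharpD (defined R) r)) \<mu>)"
  proof -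
    have "\<exists>\<pi>\<in>poss s. \<exists>\<sigma> f b' ts. subt_at s \<pi> = Fun (f, b') ts \<and> b = annotated (subt_at s \<pi>) \<and>
        flat (subt_at s \<pi>) = subst l \<sigma> \<and> (\<forall>u\<in>proper_subterms (subst l \<sigma>). adp_NF (ADPs R) (lift u)) \<and>
        \<nu> = image_mset (\<lambda>(p, r). (p, adp_res True b s \<pi> r \<sigma>)) (image_mset (\<lambda>(p, r). (p, sharpD (defined R) r)) \<mu>)"
      using st unfolding adp_istep_def adp_step_at_def lm(2) prod.case by blast
    then show ?thesis using that by blast
  qed
  have nf: "\<forall>u\<in>proper_subterms (subst l \<sigma>). NF R u" using c(4) adp_NF_lift[OF ptrs] by blast
  obtain f' ts' where "subt_at s \<pi> = Fun (f', True) ts'"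
    using step_core(1)[OF ptrs inv pi lm(1) c(3) nf] by blast
  then have b: "b" using c(2) by simp
  have "\<nu> = image_mset (\<lambda>(q, r). (q, replace_at s \<pi> (subst (sharpD (defined R) r) (lift \<circ> \<sigma>)))) \<mu>"
    unfolding c(5) b multiset.map_comp using b
    by (intro image_mset_cong) (auto simp: adp_res_TT)
  then show ?thesis using b rho lm pi c(3) nf by blast
qed


lemma tree_snoc: "tree_shape N k \<Longrightarrow> v @ [i] \<in> N \<Longrightarrow> v \<in> N \<and> i < k v"
  unfolding tree_shape_def by blast

lemma children_in: "tree_shape N k \<Longrightarrow> v @ [i] \<in> N \<Longrightarrow> (p (v @ [i]) / p v, t (v @ [i])) \<in># children_mset p t k v"
  unfolding tree_shape_def children_mset_def by auto

lemma ainv_sharp_root: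
  assumes "s \<in> basic_terms F D"
  shows "ainv D R (sharp_root s)"
proof -
  obtain f ts where s: "s = Fun f ts" "\<forall>u \<in> set ts. funs u \<inter> D = {}"
    using assms unfolding basic_terms_def by blast
  then show ?thesis by (auto simp: list_all_iff ainv_lift_noD)
qed

lemma flat_sharp_root: "flat (sharp_root s) = s"
  by (cases s) (auto simp: comp_def map_idI)

lemma chain_to_rst:
  assumes ptrs: "ptrs F R" and ct: "chain_tree (ADPs R) N p t k lab"
    and root: "t [] = sharp_root s" and bas: "s \<in> basic_terms F (defined R)"
  shows "RST R N p (flat \<circ> t) k \<and> (flat \<circ> t) [] = s \<and> edl_adp (ADPs R) N p k lab = edl N p k"
proof -
  have ts: "tree_shape N k" and cstep: "\<And>v. v \<in> N \<Longrightarrow> 1 \<le> k v \<Longrightarrow>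
      adp_istep (ADPs R) (t v) (fst (lab v)) (snd (lab v)) (children_mset p t k v)"
    using ct unfolding chain_tree_def by auto
  have inv: "v \<in> N \<Longrightarrow> ainv (defined R) R (t v)" for v
  proof (induction v rule: rev_induct)
    case Nil then show ?case using root ainv_sharp_root[OF bas] by simp
  next
    case (snoc i v)
    have v: "v \<in> N" "i < k v" using tree_snoc[OF ts snoc.prems] by auto
    have IH: "ainv (defined R) R (t v)" using snoc.IH v by blast
    from adp_step_analysis[OF ptrs IH cstep[OF v(1)]] v obtain \<pi> l \<mu> \<sigma> where
      A: "(l, \<mu>) \<in> R" "\<pi> \<in> poss (t v)" "flat (subt_at (t v) \<pi>) = subst l \<sigma>"
      "\<forall>u\<in>proper_subterms (subst l \<sigma>). NF R u"
      "children_mset p t k v = image_mset (\<lambda>(q, r). (q, replace_at (t v) \<pi> (subst (sharpD (defined R) r) (lift \<circ> \<sigma>)))) \<mu>"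
      by auto
    have "(p (v @ [i]) / p v, t (v @ [i])) \<in># children_mset p t k v" by (rule children_in[OF ts snoc.prems])
    then obtain q r where qr: "(q, r) \<in># \<mu>" "t (v @ [i]) = replace_at (t v) \<pi> (subst (sharpD (defined R) r) (lift \<circ> \<sigma>))"
      unfolding A(5) by auto
    show ?case unfolding qr(2) by (rule step_core(2)[OF ptrs IH A(2) A(1) A(3) A(4) qr(1)])
  qed
  have rst_step: "istep R ((flat \<circ> t) v) (children_mset p (flat \<circ> t) k v)"
    and lab: "snd (lab v) \<and> fst (lab v) \<in> ADPs R"
    if v: "v \<in> N" "1 \<le> k v" for v
  proof -
    from adp_step_analysis[OF ptrs inv[OF v(1)] cstep[OF v]] obtain \<pi> l \<mu> \<sigma> where
      A: "(l, \<mu>) \<in> R" "\<pi> \<in> poss (t v)" "flat (subt_at (t v) \<pi>) = subst l \<sigma>"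
      "\<forall>u\<in>proper_subterms (subst l \<sigma>). NF R u"
      "children_mset p t k v = image_mset (\<lambda>(q, r). (q, replace_at (t v) \<pi> (subst (sharpD (defined R) r) (lift \<circ> \<sigma>)))) \<mu>"
      and L: "snd (lab v) \<and> fst (lab v) \<in> ADPs R"
      by blast
    show "snd (lab v) \<and> fst (lab v) \<in> ADPs R" by (rule L)
    have "map (\<lambda>i. (p (v @ [i]) / p v, (flat \<circ> t) (v @ [i]))) [0..<k v] =
        map (\<lambda>(q, x). (q, flat x)) (map (\<lambda>i. (p (v @ [i]) / p v, t (v @ [i]))) [0..<k v])" by simp
    then have "children_mset p (flat \<circ> t) k v = image_mset (\<lambda>(q, x). (q, flat x)) (children_mset p t k v)"
      unfolding children_mset_def by (simp only: mset_map)
    also have "\<dots> = image_mset (\<lambda>(q, r). (q, replace_at (flat (t v)) \<pi> (subst r \<sigma>))) \<mu>"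
      unfolding A(5) multiset.map_comp
      by (intro image_mset_cong) (auto simp: replace_flat flat_subst)
    finally have ch: "children_mset p (flat \<circ> t) k v = image_mset (\<lambda>(q, r). (q, replace_at (flat (t v)) \<pi> (subst r \<sigma>))) \<mu>" .
    have P1: "\<pi> \<in> poss ((flat \<circ> t) v)" using A(2) by simp
    have P2: "subt_at ((flat \<circ> t) v) \<pi> = subst l \<sigma>" using A(2,3) by (simp add: subt_flat)
    have ch': "children_mset p (flat \<circ> t) k v = image_mset (\<lambda>(q, r). (q, replace_at ((flat \<circ> t) v) \<pi> (subst r \<sigma>))) \<mu>"
      using ch by simp
    show "istep R ((flat \<circ> t) v) (children_mset p (flat \<circ> t) k v)"
      unfolding istep_def using A(1) A(4) P1 P2 ch' by blast
  qed
  have "RST R N p (flat \<circ> t) k" using ct rst_step unfolding chain_tree_def RST_def by auto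
  moreover have "(flat \<circ> t) [] = s" using root flat_sharp_root by simp
  moreover have "{v \<in> N. 1 \<le> k v \<and> snd (lab v) \<and> fst (lab v) \<in> ADPs R} = {v \<in> N. 1 \<le> k v}"
    using lab by blast
  then have "edl_adp (ADPs R) N p k lab = edl N p k" unfolding edl_adp_def edl_def by simp
  ultimately show ?thesis by blast
qed


fun annt :: "(nat list \<Rightarrow> nat list \<times> ('f, 'v) trm \<times> (real \<times> ('f, 'v) trm) multiset \<times> ('v \<Rightarrow> ('f, 'v) trm) \<times> (real \<times> ('f, 'v) trm) list)
    \<Rightarrow> ('f \<times> nat) set \<Rightarrow> ('f \<times> bool, 'v) trm \<Rightarrow> nat list \<Rightarrow> ('f \<times> bool, 'v) trm" where
  "annt W D s0 [] = s0"
| "annt W D s0 (i # w) = (case W (rev w) of (\<pi>, l, \<mu>, \<sigma>, rs) \<Rightarrow>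
      replace_at (annt W D s0 w) \<pi> (subst (sharpD D (snd (rs ! i))) (lift \<circ> \<sigma>)))"

lemma rst_to_chain:
  assumes ptrs: "ptrs F R" and rst: "RST R N p t k" and root: "t [] = s"
    and bas: "s \<in> basic_terms F (defined R)"
  shows "\<exists>t' lab. chain_tree (ADPs R) N p t' k lab \<and> t' [] = sharp_root s \<and> edl_adp (ADPs R) N p k lab = edl N p k"
proof -
  let ?D = "defined R"
  have ts: "tree_shape N k" and rstep: "\<And>v. v \<in> N \<Longrightarrow> 1 \<le> k v \<Longrightarrow> istep R (t v) (children_mset p t k v)"
    using rst unfolding RST_def by auto
  define good where "good v x \<longleftrightarrow> (case x of (\<pi>, l, \<mu>, \<sigma>, rs) \<Rightarrow> \<pi> \<in> poss (t v) \<and> (l, \<mu>) \<in> R \<and>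
      subt_at (t v) \<pi> = subst l \<sigma> \<and> (\<forall>u\<in>proper_subterms (subst l \<sigma>). NF R u) \<and> mset rs = \<mu> \<and>
      map (\<lambda>i. (p (v @ [i]) / p v, t (v @ [i]))) [0..<k v] = map (\<lambda>(q, r). (q, replace_at (t v) \<pi> (subst r \<sigma>))) rs)" for v x
  define W where "W v = (SOME x. good v x)" for v
  have Wgood: "good v (W v)" if v: "v \<in> N" "1 \<le> k v" for v
  proof -
    from rstep[OF v] obtain \<pi> l \<mu> \<sigma> where A: "\<pi> \<in> poss (t v)" "(l, \<mu>) \<in> R" "subt_at (t v) \<pi> = subst l \<sigma>"
      "\<forall>u\<in>proper_subterms (subst l \<sigma>). NF R u"
      "children_mset p t k v = image_mset (\<lambda>(q, r). (q, replace_at (t v) \<pi> (subst r \<sigma>))) \<mu>"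
      unfolding istep_def by blast
    from A(5) have "mset (map (\<lambda>i. (p (v @ [i]) / p v, t (v @ [i]))) [0..<k v]) = image_mset (\<lambda>(q, r). (q, replace_at (t v) \<pi> (subst r \<sigma>))) \<mu>"
      unfolding children_mset_def .
    from mset_eq_image_ex[OF this] obtain rs where "mset rs = \<mu>"
      "map (\<lambda>(q, r). (q, replace_at (t v) \<pi> (subst r \<sigma>))) rs = map (\<lambda>i. (p (v @ [i]) / p v, t (v @ [i]))) [0..<k v]"
      by blast
    then have "good v (\<pi>, l, \<mu>, \<sigma>, rs)" unfolding good_def using A by simp
    then show ?thesis unfolding W_def by (rule someI)
  qed
  define t' where "t' v = annt W ?D (sharp_root s) (rev v)" for v
  have t'_snoc: "t' (v @ [i]) = (case W v of (\<pi>, l, \<mu>, \<sigma>, rs) \<Rightarrow>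
      replace_at (t' v) \<pi> (subst (sharpD ?D (snd (rs ! i))) (lift \<circ> \<sigma>)))" for v i
    unfolding t'_def by simp
  have t'_root: "t' [] = sharp_root s" unfolding t'_def by simp
  have Wfacts: "\<exists>\<pi> l \<mu> \<sigma> rs. W v = (\<pi>, l, \<mu>, \<sigma>, rs) \<and> \<pi> \<in> poss (t v) \<and> (l, \<mu>) \<in> R \<and>
      subt_at (t v) \<pi> = subst l \<sigma> \<and> (\<forall>u\<in>proper_subterms (subst l \<sigma>). NF R u) \<and> mset rs = \<mu> \<and>
      length rs = k v \<and>
      (\<forall>i < k v. p (v @ [i]) / p v = fst (rs ! i) \<and> t (v @ [i]) = replace_at (t v) \<pi> (subst (snd (rs ! i)) \<sigma>))"
    if v: "v \<in> N" "1 \<le> k v" for v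
  proof -
    obtain \<pi> l \<mu> \<sigma> rs where Wv: "W v = (\<pi>, l, \<mu>, \<sigma>, rs)" by (cases "W v") auto
    have g: "\<pi> \<in> poss (t v)" "(l, \<mu>) \<in> R" "subt_at (t v) \<pi> = subst l \<sigma>"
      "\<forall>u\<in>proper_subterms (subst l \<sigma>). NF R u" "mset rs = \<mu>"
      and m: "map (\<lambda>i. (p (v @ [i]) / p v, t (v @ [i]))) [0..<k v] = map (\<lambda>(q, r). (q, replace_at (t v) \<pi> (subst r \<sigma>))) rs"
      using Wgood[OF v] unfolding good_def Wv by auto
    have len: "length rs = k v" using arg_cong[OF m, of length] by simp
    have "\<forall>i < k v. p (v @ [i]) / p v = fst (rs ! i) \<and> t (v @ [i]) = replace_at (t v) \<pi> (subst (snd (rs ! i)) \<sigma>)"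
    proof (intro allI impI)
      fix i assume i: "i < k v"
      have "map (\<lambda>i. (p (v @ [i]) / p v, t (v @ [i]))) [0..<k v] ! i = map (\<lambda>(q, r). (q, replace_at (t v) \<pi> (subst r \<sigma>))) rs ! i"
        using m by simp
      then show "p (v @ [i]) / p v = fst (rs ! i) \<and> t (v @ [i]) = replace_at (t v) \<pi> (subst (snd (rs ! i)) \<sigma>)"
        using i len by (simp add: case_prod_beta)
    qed
    then show ?thesis using Wv g len by blast
  qed
  have inv: "v \<in> N \<Longrightarrow> flat (t' v) = t v \<and> ainv ?D R (t' v)" for v
  proof (induction v rule: rev_induct)
    case Nil
    show ?case using t'_root root flat_sharp_root ainv_sharp_root[OF bas] by simp
  next
    case (snoc i v)
    have v: "v \<in> N" "i < k v" using tree_snoc[OF ts snoc.prems] by auto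
    have IH: "flat (t' v) = t v" "ainv ?D R (t' v)" using snoc.IH v by auto
    from Wfacts[OF v(1)] v(2) obtain \<pi> l \<mu> \<sigma> rs where F: "W v = (\<pi>, l, \<mu>, \<sigma>, rs)" "\<pi> \<in> poss (t v)"
      "(l, \<mu>) \<in> R" "subt_at (t v) \<pi> = subst l \<sigma>" "\<forall>u\<in>proper_subterms (subst l \<sigma>). NF R u" "mset rs = \<mu>"
      "length rs = k v"
      "\<forall>i < k v. p (v @ [i]) / p v = fst (rs ! i) \<and> t (v @ [i]) = replace_at (t v) \<pi> (subst (snd (rs ! i)) \<sigma>)"
      by auto
    have tv: "t' (v @ [i]) = replace_at (t' v) \<pi> (subst (sharpD ?D (snd (rs ! i))) (lift \<circ> \<sigma>))"
      using t'_snoc[of v i] F(1) by simp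
    have "flat (t' (v @ [i])) = replace_at (t v) \<pi> (subst (snd (rs ! i)) \<sigma>)"
      unfolding tv replace_flat flat_subst IH(1) by simp
    then have fl: "flat (t' (v @ [i])) = t (v @ [i])" using F(8) v(2) by simp
    have pi': "\<pi> \<in> poss (t' v)" using F(2) IH(1) poss_flat[of "t' v"] by simp
    have fls: "flat (subt_at (t' v) \<pi>) = subst l \<sigma>" using F(4) IH(1) subt_flat[OF pi'] by simp
    have "rs ! i \<in> set rs" using F(7) v(2) by simp
    then have "(fst (rs ! i), snd (rs ! i)) \<in># \<mu>" using F(6) by auto
    from step_core(2)[OF ptrs IH(2) pi' F(3) fls F(5) this]
    have "ainv ?D R (t' (v @ [i]))" unfolding tv .
    then show ?case using fl by simp
  qed
  define lab where "lab v = (case W v of (\<pi>, l, \<mu>, \<sigma>, rs) \<Rightarrow> (canonical_adp ?D (l, \<mu>), True))" for v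
  have cstep: "adp_istep (ADPs R) (t' v) (fst (lab v)) (snd (lab v)) (children_mset p t' k v) \<and> fst (lab v) \<in> ADPs R \<and> snd (lab v)"
    if v: "v \<in> N" "1 \<le> k v" for v
  proof -
    from Wfacts[OF v] obtain \<pi> l \<mu> \<sigma> rs where F: "W v = (\<pi>, l, \<mu>, \<sigma>, rs)" "\<pi> \<in> poss (t v)"
      "(l, \<mu>) \<in> R" "subt_at (t v) \<pi> = subst l \<sigma>" "\<forall>u\<in>proper_subterms (subst l \<sigma>). NF R u" "mset rs = \<mu>"
      "length rs = k v"
      "\<forall>i < k v. p (v @ [i]) / p v = fst (rs ! i) \<and> t (v @ [i]) = replace_at (t v) \<pi> (subst (snd (rs ! i)) \<sigma>)"
      by auto
    have IH: "flat (t' v) = t v" "ainv ?D R (t' v)" using inv v by auto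
    have pi': "\<pi> \<in> poss (t' v)" using F(2) IH(1) poss_flat[of "t' v"] by simp
    have fls: "flat (subt_at (t' v) \<pi>) = subst l \<sigma>" using F(4) IH(1) subt_flat[OF pi'] by simp
    obtain f ts' where sub: "subt_at (t' v) \<pi> = Fun (f, True) ts'" "(f, length ts') \<in> ?D"
      using step_core(1)[OF ptrs IH(2) pi' F(3) fls F(5)] by blast
    have lab_v: "lab v = (canonical_adp ?D (l, \<mu>), True)" unfolding lab_def F(1) by simp
    have rho: "canonical_adp ?D (l, \<mu>) \<in> ADPs R" unfolding ADPs_def using F(3) by blast
    define g where "g = (\<lambda>(q::real, r). (q, replace_at (t' v) \<pi> (subst (sharpD ?D r) (lift \<circ> \<sigma>))))"
    have "map (\<lambda>i. (p (v @ [i]) / p v, t' (v @ [i]))) [0..<k v] = map g rs"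
    proof (rule nth_equalityI)
      show "length (map (\<lambda>i. (p (v @ [i]) / p v, t' (v @ [i]))) [0..<k v]) = length (map g rs)"
        using F(7) by simp
      fix i assume "i < length (map (\<lambda>i. (p (v @ [i]) / p v, t' (v @ [i]))) [0..<k v])"
      then have i: "i < k v" by simp
      have "t' (v @ [i]) = replace_at (t' v) \<pi> (subst (sharpD ?D (snd (rs ! i))) (lift \<circ> \<sigma>))"
        using t'_snoc[of v i] F(1) by simp
      then show "map (\<lambda>i. (p (v @ [i]) / p v, t' (v @ [i]))) [0..<k v] ! i = map g rs ! i"
        using i F(7) F(8) by (simp add: g_def case_prod_beta)
    qed
    then have "children_mset p t' k v = image_mset g \<mu>"
      unfolding children_mset_def F(6)[symmetric] by (simp only: mset_map)
    also have "\<dots> = image_mset (\<lambda>(q, r). (q, adp_res True True (t' v) \<pi> r \<sigma>)) (image_mset (\<lambda>(q, r). (q, sharpD ?D r)) \<mu>)"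
      unfolding multiset.map_comp g_def by (intro image_mset_cong) (auto simp: adp_res_TT)
    finally have ch: "children_mset p t' k v = image_mset (\<lambda>(q, r). (q, adp_res True True (t' v) \<pi> r \<sigma>)) (image_mset (\<lambda>(q, r). (q, sharpD ?D r)) \<mu>)" .
    have nf': "\<forall>u\<in>proper_subterms (subst l \<sigma>). adp_NF (ADPs R) (lift u)"
      using F(5) adp_NF_lift[OF ptrs] by blast
    have fd: "(f, length ts') \<in> adefined (ADPs R)" unfolding adefined_ADPs by (rule sub(2))
    have "adp_istep (ADPs R) (t' v) (canonical_adp ?D (l, \<mu>)) True (children_mset p t' k v)"
      unfolding adp_istep_def adp_step_at_def canonical_adp_simp prod.case
    proof (intro conjI bexI exI)
      show "(l, image_mset (\<lambda>(p, r). (p, sharpD ?D r)) \<mu>, True) \<in> ADPs R" using rho by (simp add: canonical_adp_simp)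
      show "\<pi> \<in> poss (t' v)" by (rule pi')
    qed (use sub fls nf' ch in auto)
    then show ?thesis unfolding lab_v using rho by simp
  qed
  have ct: "chain_tree (ADPs R) N p t' k lab"
    using rst cstep unfolding chain_tree_def RST_def by blast
  have "{v \<in> N. 1 \<le> k v \<and> snd (lab v) \<and> fst (lab v) \<in> ADPs R} = {v \<in> N. 1 \<le> k v}"
    using cstep by blast
  then have "edl_adp (ADPs R) N p k lab = edl N p k" unfolding edl_adp_def edl_def by simp
  then show ?thesis using ct t'_root by blast
qed


theorem mainTheorem1:
  fixes F :: "('f \<times> nat) set" and R :: "('f, 'v) prule set"
  assumes "finite F" and "ptrs F R"
  shows "(\<forall>t \<in> basic_terms F (defined R). edh R t = edh_adp (ADPs R) (ADPs R) t)
         \<and> iota (eirc F R) = iota (eirc_adp F (ADPs R) (ADPs R))"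
proof -
  have ptrs: "ptrs F R" by (rule assms(2))
  have eq: "\<forall>t \<in> basic_terms F (defined R). edh R t = edh_adp (ADPs R) (ADPs R) t"
  proof
    fix s :: "('f, 'v) trm" assume bas: "s \<in> basic_terms F (defined R)"
    show "edh R s = edh_adp (ADPs R) (ADPs R) s"
    proof (rule antisym)
      show "edh R s \<le> edh_adp (ADPs R) (ADPs R) s" unfolding edh_def
      proof (rule SUP_least)
        fix x assume "x \<in> {(N, p, t, k). RST R N p t k \<and> t [] = s}"
        then obtain N p t k where x: "x = (N, p, t, k)" "RST R N p t k" "t [] = s" by auto
        from rst_to_chain[OF ptrs x(2) x(3) bas] obtain t' lab where
          c: "chain_tree (ADPs R) N p t' k lab" "t' [] = sharp_root s" "edl_adp (ADPs R) N p k lab = edl N p k"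
          by blast
        have "edl_adp (ADPs R) N p k lab \<le> edh_adp (ADPs R) (ADPs R) s" unfolding edh_adp_def
          by (rule SUP_upper2[where i="(N, p, t', k, lab)"]) (use c in auto)
        then show "(case x of (N, p, t, k) \<Rightarrow> edl N p k) \<le> edh_adp (ADPs R) (ADPs R) s"
          using x(1) c(3) by simp
      qed
    next
      show "edh_adp (ADPs R) (ADPs R) s \<le> edh R s" unfolding edh_adp_def
      proof (rule SUP_least)
        fix x assume "x \<in> {(N, p, t, k, lab). chain_tree (ADPs R) N p t k lab \<and> t [] = sharp_root s}"
        then obtain N p t k lab where x: "x = (N, p, t, k, lab)" "chain_tree (ADPs R) N p t k lab" "t [] = sharp_root s"
          by auto
        from chain_to_rst[OF ptrs x(2) x(3) bas] have
          c: "RST R N p (flat \<circ> t) k" "(flat \<circ> t) [] = s" "edl_adp (ADPs R) N p k lab = edl N p k"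
          by auto
        have "edl N p k \<le> edh R s" unfolding edh_def
          by (rule SUP_upper2[where i="(N, p, flat \<circ> t, k)"]) (use c in auto)
        then show "(case x of (N, p, t, k, lab) \<Rightarrow> edl_adp (ADPs R) N p k lab) \<le> edh R s"
          using x(1) c(3) by simp
      qed
    qed
  qed
  have "eirc F R = eirc_adp F (ADPs R) (ADPs R)"
  proof
    fix n
    show "eirc F R n = eirc_adp F (ADPs R) (ADPs R) n"
      unfolding eirc_def eirc_adp_def adefined_ADPs
      by (rule SUP_cong) (use eq in auto)
  qed
  then show ?thesis using eq by simp
qed

end
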